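(* Under the standing assumptions, suppose in addition that $J$ is absolutely $p$-homogeneous. If $u$ is a $p$-eigenvector of $J$ with subgradient $\zeta$ and eigenvalue $\lambda$, then $|\zeta|_{H^*}\le|\tilde\zeta|_{H^*}$ for every $\tilde\zeta\in\partial J(u)$.
   Context: Standing assumptions: $X$ is a real reflexive Banach space with dual $X^*$ and duality pairing $\langle\cdot,\cdot\rangle$; $\Gamma_0(X)$ is the class of proper, lower semi-continuous, convex functionals $X\to\mathbb{R}\cup\{+\infty\}$. Fix $1<p<\infty$. Let $J\in\Gamma_0(X)$, and let $H\in\Gamma_0(X)$ be absolutely $p$-homogeneous ($H(tu)=|t|^pH(u)$) such that $|u|_H:=(pH(u))^{1/p}$ is a norm on $X$, so $H(u)=\frac1p|u|_H^p$. The dual norm is $|\zeta|_{H^*}=\sup_{u\ne0}\langle\zeta,u\rangle/|u|_H$. The subdifferential is $\partial J(u)=\{\zeta\in X^*:\ J(u)+\langle\zeta,v-u\rangle\le J(v)\ \forall v\in X\}$. Growth assumption: there is $c>0$ with $H(u)\le cJ(u)$ for all $u\in X$. The Rayleigh quotient is $R(u)=J(u)/H(u)$ for $u\ne0$. A $p$-eigenvector of $J$: $u\in X\setminus\{0\}$ with subgradient $\zeta\in\partial J(u)$ and eigenvalue $\lambda=R(u)\in\mathbb{R}$ such that $\zeta\in\lambda\,\partial H(u)$. *)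

theory Defs
  imports "HOL-Analysis.Analysis"
begin

text \<open>Functionals X \<rightarrow> \<real> \<union> {+\<infinity>} are modelled as maps into ereal that never take the value -\<infinity>.
  The dual space X* is the space of bounded linear functionals 'a =>L real; the duality
  pairing is function application.\<close>

definition reflexive_space :: "'a::banach itself \<Rightarrow> bool" where
  "reflexive_space _ \<longleftrightarrow>
     (\<forall>\<phi> :: ('a \<Rightarrow>\<^sub>L real) \<Rightarrow>\<^sub>L real. \<exists>x::'a. \<forall>\<zeta>. blinfun_apply \<phi> \<zeta> = blinfun_apply \<zeta> x)"

definition proper_fun :: "('a \<Rightarrow> ereal) \<Rightarrow> bool" where
  "proper_fun J \<longleftrightarrow> (\<forall>u. J u \<noteq> -\<infinity>) \<and> (\<exists>u. J u \<noteq> \<infinity>)"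

definition lsc_fun :: "('a::topological_space \<Rightarrow> ereal) \<Rightarrow> bool" where
  "lsc_fun J \<longleftrightarrow> (\<forall>r::real. closed {u. J u \<le> ereal r})"

definition convex_fun :: "('a::real_vector \<Rightarrow> ereal) \<Rightarrow> bool" where
  "convex_fun J \<longleftrightarrow> (\<forall>u v. \<forall>t::real. 0 \<le> t \<and> t \<le> 1 \<longrightarrow>
      J ((1 - t) *\<^sub>R u + t *\<^sub>R v) \<le> ereal (1 - t) * J u + ereal t * J v)"

definition Gamma0 :: "('a::real_normed_vector \<Rightarrow> ereal) \<Rightarrow> bool" where
  "Gamma0 J \<longleftrightarrow> proper_fun J \<and> lsc_fun J \<and> convex_fun J"

definition abs_p_homogeneous :: "real \<Rightarrow> ('a::real_vector \<Rightarrow> ereal) \<Rightarrow> bool" where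
  "abs_p_homogeneous p J \<longleftrightarrow> (\<forall>t u. J (t *\<^sub>R u) = ereal (\<bar>t\<bar> powr p) * J u)"

definition is_norm :: "('a::real_vector \<Rightarrow> real) \<Rightarrow> bool" where
  "is_norm N \<longleftrightarrow> (\<forall>u. 0 \<le> N u) \<and> (\<forall>u. N u = 0 \<longleftrightarrow> u = 0)
     \<and> (\<forall>c u. N (c *\<^sub>R u) = \<bar>c\<bar> * N u) \<and> (\<forall>u v. N (u + v) \<le> N u + N v)"

definition Hnorm :: "real \<Rightarrow> ('a \<Rightarrow> ereal) \<Rightarrow> 'a \<Rightarrow> real" where
  "Hnorm p H u = (p * real_of_ereal (H u)) powr (1 / p)"

definition dual_Hnorm :: "real \<Rightarrow> ('a::real_normed_vector \<Rightarrow> ereal) \<Rightarrow> ('a \<Rightarrow>\<^sub>L real) \<Rightarrow> ereal" where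
  "dual_Hnorm p H \<zeta> = (SUP u \<in> - {0}. ereal (blinfun_apply \<zeta> u / Hnorm p H u))"

definition subdiff :: "('a::real_normed_vector \<Rightarrow> ereal) \<Rightarrow> 'a \<Rightarrow> ('a \<Rightarrow>\<^sub>L real) set" where
  "subdiff J u = {\<zeta>. \<forall>v. J u + ereal (blinfun_apply \<zeta> (v - u)) \<le> J v}"

definition rayleigh :: "('a \<Rightarrow> ereal) \<Rightarrow> ('a \<Rightarrow> ereal) \<Rightarrow> 'a \<Rightarrow> ereal" where
  "rayleigh J H u = J u / H u"

definition p_eigenvector ::
  "('a::real_normed_vector \<Rightarrow> ereal) \<Rightarrow> ('a \<Rightarrow> ereal) \<Rightarrow> 'a \<Rightarrow> ('a \<Rightarrow>\<^sub>L real) \<Rightarrow> real \<Rightarrow> bool" where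
  "p_eigenvector J H u \<zeta> lam \<longleftrightarrow> u \<noteq> 0 \<and> \<zeta> \<in> subdiff J u \<and> ereal lam = rayleigh J H u
     \<and> (\<exists>\<eta> \<in> subdiff H u. \<zeta> = lam *\<^sub>R \<eta>)"

end

theory Submission imports Defs begin

lemma hom_nonneg:
  fixes F :: "'a::real_vector \<Rightarrow> ereal"
  assumes pr: "\<forall>v. F v \<noteq> -\<infinity>" and cv: "convex_fun F" and hom: "abs_p_homogeneous p F" and p: "0 < p"
  shows "0 \<le> F v"
proof -
  have F0: "F 0 = 0"
  proof -
    have "F (0 *\<^sub>R v) = ereal (\<bar>0\<bar> powr p) * F v" using hom unfolding abs_p_homogeneous_def by blast
    then show ?thesis by simp
  qed
  have Fm: "F (-v) = F v"
  proof -
    have "F ((-1) *\<^sub>R v) = ereal (\<bar>-1\<bar> powr p) * F v" using hom unfolding abs_p_homogeneous_def by blast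
    then show ?thesis by simp
  qed
  have "F ((1 - 1/2) *\<^sub>R v + (1/2) *\<^sub>R (-v)) \<le> ereal (1 - 1/2) * F v + ereal (1/2) * F (-v)"
    using cv[unfolded convex_fun_def, rule_format, of "1/2" v "-v"] by simp
  then have "0 \<le> ereal (1/2) * F v + ereal (1/2) * F v" using F0 Fm by (simp add: algebra_simps)
  then show ?thesis using pr by (cases "F v") auto
qed

lemma euler:
  fixes F :: "'a::real_normed_vector \<Rightarrow> ereal"
  assumes hom: "abs_p_homogeneous p F" and xi: "\<xi> \<in> subdiff F u" and Fu: "F u = ereal j"
  shows "blinfun_apply \<xi> u = p * j"
proof -
  define q where "q h = ((1 + h) powr p - 1 powr p) / h" for h :: real
  have key: "h * blinfun_apply \<xi> u \<le> ((1+h) powr p - 1) * j" if "h > -1" for h :: real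
  proof -
    have "F u + ereal (blinfun_apply \<xi> ((1+h) *\<^sub>R u - u)) \<le> F ((1+h) *\<^sub>R u)"
      using xi unfolding subdiff_def by blast
    also have "F ((1+h) *\<^sub>R u) = ereal ((1+h) powr p * j)" using hom Fu that
      unfolding abs_p_homogeneous_def by simp
    finally have "j + blinfun_apply \<xi> (h *\<^sub>R u) \<le> (1+h) powr p * j" using Fu
      by (simp add: algebra_simps)
    then show ?thesis by (simp add: blinfun.scaleR_right algebra_simps)
  qed
  have D: "(q \<longlongrightarrow> p) (at 0)"
    using has_real_derivative_powr[of 1 p] unfolding DERIV_def q_def by (simp add: add.commute)
  have up: "blinfun_apply \<xi> u \<le> p * j"
  proof (rule tendsto_le[of "at_right 0" "\<lambda>h. q h * j" _ "\<lambda>_. blinfun_apply \<xi> u"])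
    show "((\<lambda>h. q h * j) \<longlongrightarrow> p * j) (at_right 0)"
      by (intro tendsto_mult_right tendsto_mono[OF at_within_le_at D])
    show "\<forall>\<^sub>F h in at_right 0. blinfun_apply \<xi> u \<le> q h * j"
    proof -
      have "\<forall>h. 0 < h \<and> h < 0 + 1 \<longrightarrow> blinfun_apply \<xi> u \<le> q h * j"
      proof (intro allI impI)
        fix h :: real assume "0 < h \<and> h < 0 + 1"
        then show "blinfun_apply \<xi> u \<le> q h * j" using key[of h] unfolding q_def
          by (simp add: field_simps)
      qed
      then show ?thesis unfolding eventually_at_right_field by (intro exI[of _ 1]) auto
    qed
  qed auto
  have lo: "p * j \<le> blinfun_apply \<xi> u"
  proof (rule tendsto_le[of "at_left 0" "\<lambda>_. blinfun_apply \<xi> u" _ "\<lambda>h. q h * j"])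
    show "((\<lambda>h. q h * j) \<longlongrightarrow> p * j) (at_left 0)"
      by (intro tendsto_mult_right tendsto_mono[OF at_within_le_at D])
    show "\<forall>\<^sub>F h in at_left 0. q h * j \<le> blinfun_apply \<xi> u"
    proof -
      have "\<forall>h. -1 < h \<and> h < 0 \<longrightarrow> q h * j \<le> blinfun_apply \<xi> u"
      proof (intro allI impI)
        fix h :: real assume "-1 < h \<and> h < 0"
        then show "q h * j \<le> blinfun_apply \<xi> u" using key[of h] unfolding q_def
          by (simp add: field_simps)
      qed
      then show ?thesis unfolding eventually_at_left_field by (intro exI[of _ "-1"]) auto
    qed
  qed auto
  show ?thesis using up lo by simp
qed


theorem mainTheorem5:
  fixes J H :: "'a::banach \<Rightarrow> ereal" and p c lam :: real and u :: 'a and \<zeta> \<zeta>' :: "'a \<Rightarrow>\<^sub>L real"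
  assumes refl: "reflexive_space TYPE('a)"
    and p: "1 < p"
    and J: "Gamma0 J" and H: "Gamma0 H"
    and Hhom: "abs_p_homogeneous p H"
    and Hfin: "\<forall>v. H v \<noteq> \<infinity>"
    and Hnorm: "is_norm (Hnorm p H)"
    and growth: "0 < c" "\<forall>v. H v \<le> ereal c * J v"
    and Jhom: "abs_p_homogeneous p J"
    and eig: "p_eigenvector J H u \<zeta> lam"
    and sub: "\<zeta>' \<in> subdiff J u"
  shows "dual_Hnorm p H \<zeta> \<le> dual_Hnorm p H \<zeta>'"
proof -
  define N where "N = Hnorm p H"
  have Nn: "is_norm N" using Hnorm N_def by simp
  have N0: "N v \<ge> 0" for v using Nn unfolding is_norm_def by blast
  have Nz: "N v = 0 \<longleftrightarrow> v = 0" for v using Nn unfolding is_norm_def by blast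
  have Ns: "N (a *\<^sub>R v) = \<bar>a\<bar> * N v" for a v using Nn unfolding is_norm_def by blast
  have Hpr: "\<forall>v. H v \<noteq> -\<infinity>" and Hcv: "convex_fun H"
    using H unfolding Gamma0_def proper_fun_def by auto
  have Jpr: "\<forall>v. J v \<noteq> -\<infinity>" and Jcv: "convex_fun J"
    using J unfolding Gamma0_def proper_fun_def by auto
  have Hge: "0 \<le> H v" for v using hom_nonneg[OF Hpr Hcv Hhom] p by simp
  have Hreal: "H v = ereal (real_of_ereal (H v))" for v using Hpr Hfin by (cases "H v") auto
  have HN: "H v = ereal (N v powr p / p)" for v
  proof -
    have h0: "0 \<le> real_of_ereal (H v)" using Hge[of v] by (simp add: real_of_ereal_pos)
    have "N v powr p = (p * real_of_ereal (H v)) powr (1/p * p)"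
      unfolding N_def Hnorm_def by (simp add: powr_powr)
    also have "\<dots> = p * real_of_ereal (H v)" using p h0 by simp
    finally show ?thesis using p Hreal[of v] by simp
  qed
  obtain \<eta> where u0: "u \<noteq> 0" and zs: "\<zeta> \<in> subdiff J u" and lamR: "ereal lam = J u / H u"
    and es: "\<eta> \<in> subdiff H u" and ze: "\<zeta> = lam *\<^sub>R \<eta>"
    using eig unfolding p_eigenvector_def rayleigh_def by blast
  have Nu: "N u > 0" using N0[of u] Nz[of u] u0 by simp
  define h where "h = N u powr p / p"
  have hpos: "h > 0" using Nu p unfolding h_def by simp
  have Hu: "H u = ereal h" using HN h_def by simp
  obtain j where Ju: "J u = ereal j"
  proof (cases "J u")
    case (real r) then show ?thesis using that by simp
  next
    case PInf
    then have "J u / H u = \<infinity>" using Hu hpos by (simp add: divide_ereal_def)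
    then show ?thesis using lamR by simp
  next
    case MInf then show ?thesis using Jpr by simp
  qed
  have j0: "0 \<le> j" using hom_nonneg[OF Jpr Jcv Jhom] p Ju by (metis ereal_less_eq(5) less_trans zero_less_one)
  have lamv: "lam = j / h" using lamR Ju Hu hpos by (simp add: divide_ereal_def divide_inverse)
  have lam0: "0 \<le> lam" using lamv j0 hpos by simp
  have zu: "blinfun_apply \<zeta> u = p * j" using euler[OF Jhom zs Ju] .
  have zu': "blinfun_apply \<zeta>' u = p * j" using euler[OF Jhom sub Ju] .
  have etab: "blinfun_apply \<eta> v \<le> blinfun_apply \<eta> u * N v / N u" if v0: "v \<noteq> 0" for v
  proof -
    have Nv: "N v > 0" using N0[of v] Nz[of v] v0 by simp
    define w where "w = (N u / N v) *\<^sub>R v"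
    have "N w = N u" unfolding w_def using Ns Nv Nu by simp
    then have Hw: "H w = H u" using HN by simp
    have "H u + ereal (blinfun_apply \<eta> (w - u)) \<le> H w" using es unfolding subdiff_def by blast
    then have "blinfun_apply \<eta> (w - u) \<le> 0" using Hw Hu by simp
    then have "(N u / N v) * blinfun_apply \<eta> v \<le> blinfun_apply \<eta> u"
      unfolding w_def by (simp add: blinfun.diff_right blinfun.scaleR_right)
    then show ?thesis using Nv Nu by (simp add: field_simps)
  qed
  have zb: "blinfun_apply \<zeta> v / N v \<le> p * j / N u" if v0: "v \<noteq> 0" for v
  proof -
    have Nv: "N v > 0" using N0[of v] Nz[of v] v0 by simp
    have "blinfun_apply \<zeta> v = lam * blinfun_apply \<eta> v" using ze by (simp add: scaleR_blinfun.rep_eq)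
    also have "\<dots> \<le> lam * (blinfun_apply \<eta> u * N v / N u)"
      using etab[OF v0] lam0 by (rule mult_left_mono)
    also have "\<dots> = blinfun_apply \<zeta> u * N v / N u" using ze by (simp add: scaleR_blinfun.rep_eq)
    finally have "blinfun_apply \<zeta> v \<le> p * j * N v / N u" using zu by simp
    then show ?thesis using Nv Nu by (simp add: field_simps)
  qed
  have "dual_Hnorm p H \<zeta> \<le> ereal (p * j / N u)"
    unfolding dual_Hnorm_def N_def[symmetric] using zb by (intro SUP_least) auto
  also have "ereal (p * j / N u) \<le> dual_Hnorm p H \<zeta>'"
    unfolding dual_Hnorm_def N_def[symmetric] using zu' u0
    by (intro SUP_upper2[of u]) auto
  finally show ?thesis .
qed

end
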